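(* Let $\mathbb{A}$ be a non-empty set, $\varphi:\mathbb{A}^+\to C$ a finite coloring, $x\in\mathbb{A}^\omega$ and $k\ge1$. Then some suffix $x'$ of $x$ admits a $k$-shift invariant $\varphi$-sequentially monochromatic factorization.
   Context: $T$ denotes the shift on $\mathbb{A}^\omega$, $T(x_0x_1x_2\cdots)=x_1x_2\cdots$. A factorization $x'=V_0V_1V_2\cdots$ with all $V_i\in\mathbb{A}^+$ is $\varphi$-sequentially monochromatic if there is $c\in C$ with $\varphi(V_iV_{i+1}\cdots V_{i+j})=c$ for all $i,j\ge0$. Such a factorization is $k$-shift invariant if for every $1\le j\le k$ the induced factorization $T^j(x')=W_0W_1W_2\cdots$ with $|W_i|=|V_i|$ for all $i$ is also $\varphi$-sequentially monochromatic (the color may depend on $j$). *)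

theory Defs
  imports Main
begin

text \<open>A factorization
  V_0 V_1 V_2 ... of an infinite word with nonempty factors is encoded by its
  cut points: a strictly increasing b :: nat => nat with b 0 = 0, so that
  V_i is the factor occupying positions b i, ..., b (i+1) - 1.\<close>

definition factor :: "(nat \<Rightarrow> 'a) \<Rightarrow> nat \<Rightarrow> nat \<Rightarrow> 'a list" where
  "factor x i j = map x [i..<j]"

definition shift :: "(nat \<Rightarrow> 'a) \<Rightarrow> nat \<Rightarrow> 'a" where
  "shift x = (\<lambda>n. x (Suc n))"

definition is_factorization :: "(nat \<Rightarrow> nat) \<Rightarrow> bool" where
  "is_factorization b \<longleftrightarrow> b 0 = 0 \<and> strict_mono b"

definition seq_mono :: "('a list \<Rightarrow> 'c) \<Rightarrow> (nat \<Rightarrow> 'a) \<Rightarrow> (nat \<Rightarrow> nat) \<Rightarrow> bool" where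
  "seq_mono \<phi> x b \<longleftrightarrow> (\<exists>c. \<forall>i j. \<phi> (factor x (b i) (b (i + j + 1))) = c)"

text \<open>k-shift invariance: for 1 <= j <= k, the factorization of T^j x with the
  same factor lengths (hence the same cut points) is phi-sequentially monochromatic.\<close>
definition shift_invariant :: "nat \<Rightarrow> ('a list \<Rightarrow> 'c) \<Rightarrow> (nat \<Rightarrow> 'a) \<Rightarrow> (nat \<Rightarrow> nat) \<Rightarrow> bool" where
  "shift_invariant k \<phi> x b \<longleftrightarrow> (\<forall>j. 1 \<le> j \<and> j \<le> k \<longrightarrow> seq_mono \<phi> ((shift ^^ j) x) b)"

end

theory Submission
  imports Defs "HOL-Library.Ramsey"
begin

lemma shift_pow: "(shift ^^ n) x i = x (i + n)"
  by (induction n arbitrary: i) (auto simp: shift_def)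

lemma map_upt_shift: "map (\<lambda>p. f (p + n)) [a..<b] = map f [a+n..<b+n]"
  by (induction b) auto

theorem corollary3p2:
  fixes A :: "'a set" and C :: "'c set" and \<phi> :: "'a list \<Rightarrow> 'c"
    and x :: "nat \<Rightarrow> 'a" and k :: nat
  assumes "A \<noteq> {}"
    and "finite C"
    and "\<And>w. w \<noteq> [] \<Longrightarrow> set w \<subseteq> A \<Longrightarrow> \<phi> w \<in> C"
    and "\<And>n. x n \<in> A"
    and "k \<ge> 1"
  shows "\<exists>m b. is_factorization b \<and> seq_mono \<phi> ((shift ^^ m) x) b
               \<and> shift_invariant k \<phi> ((shift ^^ m) x) b"
proof -
  define vec where "vec = (\<lambda>p q. map (\<lambda>s. \<phi> (map x [p+s..<q+s])) [0..<Suc k])"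
  define D where "D = {l. set l \<subseteq> C \<and> length l = Suc k}"
  have finD: "finite D" unfolding D_def using assms(2) by (rule finite_lists_length_eq)
  obtain h where h: "bij_betw h D {0..<card D}" using ex_bij_betw_finite_nat[OF finD] by blast
  have vecD: "vec p q \<in> D" if "p < q" for p q
  proof -
    have "\<phi> (map x [p+s..<q+s]) \<in> C" for s
      using that assms(4) by (intro assms(3)) auto
    then show ?thesis unfolding D_def vec_def by auto
  qed
  define f where "f = (\<lambda>S::nat set. h (vec (Min S) (Max S)))"
  have part: "\<forall>p\<in>(UNIV::nat set). \<forall>q\<in>UNIV. p \<noteq> q \<longrightarrow> f {p, q} < card D"
  proof (intro ballI impI)
    fix p q :: nat assume "p \<noteq> q"
    then have "Min {p,q} < Max {p,q}" by (auto simp: min_def max_def)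
    then have "vec (Min {p,q}) (Max {p,q}) \<in> D" by (rule vecD)
    then show "f {p, q} < card D" unfolding f_def using h by (auto simp: bij_betw_def)
  qed
  obtain Y t where Y: "infinite Y" "\<forall>p\<in>Y. \<forall>q\<in>Y. p\<noteq>q \<longrightarrow> f {p, q} = t"
    using Ramsey2[OF infinite_UNIV_nat part] by blast
  define e where "e = enumerate Y"
  have sm: "strict_mono e" unfolding e_def using Y(1) by (rule strict_mono_enumerate)
  have eY: "e n \<in> Y" for n unfolding e_def using Y(1) by (rule enumerate_in_set)
  define v0 where "v0 = vec (e 0) (e 1)"
  have vconst: "vec (e i) (e l) = v0" if "i < l" for i l
  proof -
    have lt: "e i < e l" using sm that by (simp add: strict_mono_less)
    have lt2: "e 0 < e 1" using sm by (simp add: strict_mono_less)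
    have "f {e i, e l} = t" using Y(2) eY lt by auto
    moreover have "f {e 0, e 1} = t" using Y(2) eY lt2 by auto
    ultimately have "h (vec (e i) (e l)) = h v0"
      unfolding f_def v0_def using lt lt2 by (simp add: min_def max_def)
    moreover have "inj_on h D" using h by (simp add: bij_betw_def)
    ultimately show ?thesis using vecD[OF lt] vecD[OF lt2] unfolding v0_def
      by (meson inj_onD)
  qed
  define m where "m = e 0"
  define b where "b = (\<lambda>i. e i - m)"
  have em: "e i \<ge> m" for i unfolding m_def using sm by (simp add: strict_mono_less_eq)
  have bfac: "is_factorization b"
    unfolding is_factorization_def b_def m_def
  proof
    show "strict_mono (\<lambda>i. e i - e 0)"
      using sm em unfolding m_def by (auto simp: strict_mono_def intro!: diff_less_mono)
  qed simp
  have key: "seq_mono \<phi> ((shift ^^ j) ((shift ^^ m) x)) b" if "j \<le> k" for j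
  proof -
    have "\<phi> (factor ((shift ^^ j) ((shift ^^ m) x)) (b i) (b (i + l + 1))) = v0 ! j" for i l
    proof -
      have "factor ((shift ^^ j) ((shift ^^ m) x)) (b i) (b (i + l + 1))
            = map x [e i + j..<e (i+l+1) + j]"
      proof -
        have "factor ((shift ^^ j) ((shift ^^ m) x)) (b i) (b (i + l + 1))
              = map (\<lambda>p. x (p + (j + m))) [b i..<b (i+l+1)]"
          by (simp add: factor_def shift_pow add.assoc)
        also have "\<dots> = map x [b i + (j+m)..<b (i+l+1) + (j+m)]" by (rule map_upt_shift)
        also have "\<dots> = map x [e i + j..<e (i+l+1) + j]"
          using em[of i] em[of "i+l+1"] unfolding b_def by (simp add: algebra_simps)
        finally show ?thesis .
      qed
      moreover have "vec (e i) (e (i+l+1)) = v0" by (rule vconst) simp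
      ultimately show ?thesis using that unfolding vec_def
        by (metis (no_types, lifting) add_0 diff_zero length_upt less_Suc_eq_le nth_map nth_upt)
    qed
    then show ?thesis unfolding seq_mono_def by blast
  qed
  show ?thesis
    apply (rule exI[of _ m], rule exI[of _ b])
    using bfac key[of 0] key unfolding shift_invariant_def by auto
qed

end
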